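(* If $mG$ is a finite canonical misinformation game, then $SME(mG)\neq\emptyset$.
   Context: A normal-form game is $G=\langle N,S,P\rangle$ with finite players $N$, finite pure strategy sets $S_i$, positions $S=\times_i S_i$, payoffs $P_i:S\to\mathbb{R}$. A misinformation game $mG=\langle G^0,G^1,\dots,G^{|N|}\rangle$ consists of the actual game $G^0$ and subjective games $G^i$; it is canonical if all $G^i=\langle N,S,P^i\rangle$ differ from $G^0$ only in payoffs and in every $G^i$ all players have equally many pure strategies. $NME(mG)$ is the set of profiles $\sigma=(\sigma_1,\dots,\sigma_{|N|})$ such that each $\sigma_i$ is player $i$'s component of some Nash equilibrium of $G^i$. $\chi(\sigma)=\mathrm{supp}(\sigma_1)\times\dots\times\mathrm{supp}(\sigma_{|N|})$. For $\vec v\in S$, $mG_{\vec v}$ is obtained by replacing, in every $P^i$ ($i\ge1$), the payoff vector at position $\vec v$ by $P^0(\vec v)$. For a set $M$ of misinformation games, $\mathcal{AD}(M)=\{mG_{\vec u}: mG\in M,\sigma\in NME(mG),\vec u\in\chi(\sigma)\}$, $\mathcal{AD}^{(0)}(M)=M$, $\mathcal{AD}^{(t+1)}(M)=\mathcal{AD}^{(t)}(\mathcal{AD}(M))$; the length $\mathfrak{L}$ is the least $t\ge0$ with $\mathcal{AD}^{(t+1)}(M)=\mathcal{AD}^{(t)}(M)$ and $\mathcal{AD}^\infty(M)=\mathcal{AD}^{(\mathfrak{L})}(M)$. A profile $\sigma$ is a stable misinformed equilibrium (sme) of $mG$ if there is $\widehat{mG}\in\mathcal{AD}^\infty(\{mG\})$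 with $\sigma\in NME(\widehat{mG})$ and $\widehat{mG}_{\vec v}=\widehat{mG}$ for all $\vec v\in\chi(\sigma)$; $SME(mG)$ is the set of smes. *)

theory Defs
  imports Complex_Main "HOL-Library.FuncSet"
begin

text \<open>
  Canonical misinformation games over a fixed finite set of players N and fixed pure
  strategy sets S i (shared by the actual game and all subjective games, which differ
  only in payoffs).
  A canonical misinformation game is a pair (P0, P) where P0 is the payoff function
  of the actual game G^0 and P i is the payoff function of the subjective game G^i
  of player i (for i in N).
\<close>

type_synonym ('i, 's) payoff = "('i \<Rightarrow> 's) \<Rightarrow> 'i \<Rightarrow> real"
type_synonym ('i, 's) mgame = "('i, 's) payoff \<times> ('i \<Rightarrow> ('i, 's) payoff)"
type_synonym ('i, 's) profile = "'i \<Rightarrow> 's \<Rightarrow> real"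

definition positions :: "'i set \<Rightarrow> ('i \<Rightarrow> 's set) \<Rightarrow> ('i \<Rightarrow> 's) set" where
  "positions N S = PiE N S"

definition mixed_strats :: "('i \<Rightarrow> 's set) \<Rightarrow> 'i \<Rightarrow> ('s \<Rightarrow> real) set" where
  "mixed_strats S i = {f. (\<forall>s. 0 \<le> f s) \<and> (\<forall>s. s \<notin> S i \<longrightarrow> f s = 0) \<and> sum f (S i) = 1}"

definition mixed_profiles :: "'i set \<Rightarrow> ('i \<Rightarrow> 's set) \<Rightarrow> ('i, 's) profile set" where
  "mixed_profiles N S = PiE N (mixed_strats S)"

definition exp_payoff :: "'i set \<Rightarrow> ('i \<Rightarrow> 's set) \<Rightarrow> ('i, 's) payoff \<Rightarrow> ('i, 's) profile \<Rightarrow> 'i \<Rightarrow> real" where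
  "exp_payoff N S Q \<sigma> i = (\<Sum>v\<in>positions N S. (\<Prod>j\<in>N. \<sigma> j (v j)) * Q v i)"

definition nash :: "'i set \<Rightarrow> ('i \<Rightarrow> 's set) \<Rightarrow> ('i, 's) payoff \<Rightarrow> ('i, 's) profile \<Rightarrow> bool" where
  "nash N S Q \<sigma> \<longleftrightarrow> \<sigma> \<in> mixed_profiles N S \<and>
     (\<forall>i\<in>N. \<forall>\<tau>\<in>mixed_strats S i. exp_payoff N S Q (\<sigma>(i := \<tau>)) i \<le> exp_payoff N S Q \<sigma> i)"

definition NME :: "'i set \<Rightarrow> ('i \<Rightarrow> 's set) \<Rightarrow> ('i, 's) mgame \<Rightarrow> ('i, 's) profile set" where
  "NME N S mG = {\<sigma>. \<sigma> \<in> mixed_profiles N S \<and>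
      (\<forall>i\<in>N. \<exists>\<tau>. nash N S (snd mG i) \<tau> \<and> \<sigma> i = \<tau> i)}"

definition chi :: "'i set \<Rightarrow> ('i \<Rightarrow> 's set) \<Rightarrow> ('i, 's) profile \<Rightarrow> ('i \<Rightarrow> 's) set" where
  "chi N S \<sigma> = PiE N (\<lambda>i. {s \<in> S i. \<sigma> i s \<noteq> 0})"

definition adapt :: "'i set \<Rightarrow> ('i, 's) mgame \<Rightarrow> ('i \<Rightarrow> 's) \<Rightarrow> ('i, 's) mgame" where
  "adapt N mG v = (fst mG, \<lambda>j. if j \<in> N then (snd mG j)(v := fst mG v) else snd mG j)"

definition AD :: "'i set \<Rightarrow> ('i \<Rightarrow> 's set) \<Rightarrow> ('i, 's) mgame set \<Rightarrow> ('i, 's) mgame set" where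
  "AD N S M = {adapt N mG u | mG \<sigma> u. mG \<in> M \<and> \<sigma> \<in> NME N S mG \<and> u \<in> chi N S \<sigma>}"

definition AD_iter :: "nat \<Rightarrow> 'i set \<Rightarrow> ('i \<Rightarrow> 's set) \<Rightarrow> ('i, 's) mgame set \<Rightarrow> ('i, 's) mgame set" where
  "AD_iter t N S M = (AD N S ^^ t) M"

definition AD_length :: "'i set \<Rightarrow> ('i \<Rightarrow> 's set) \<Rightarrow> ('i, 's) mgame set \<Rightarrow> nat" where
  "AD_length N S M = (LEAST t. AD_iter (Suc t) N S M = AD_iter t N S M)"

definition AD_inf :: "'i set \<Rightarrow> ('i \<Rightarrow> 's set) \<Rightarrow> ('i, 's) mgame set \<Rightarrow> ('i, 's) mgame set" where
  "AD_inf N S M = AD_iter (AD_length N S M) N S M"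

definition SME :: "'i set \<Rightarrow> ('i \<Rightarrow> 's set) \<Rightarrow> ('i, 's) mgame \<Rightarrow> ('i, 's) profile set" where
  "SME N S mG = {\<sigma>. \<exists>mG' \<in> AD_inf N S {mG}. \<sigma> \<in> NME N S mG' \<and>
      (\<forall>v \<in> chi N S \<sigma>. adapt N mG' v = mG')}"

end

theory Submission
  imports Defs "HOL-Analysis.Analysis"
begin

definition cube :: "nat \<Rightarrow> (nat \<Rightarrow> real) set" where
  "cube n = PiE UNIV (\<lambda>j. if j < n then {0..1} else {0})"

lemma cube_iff: "x \<in> cube n \<longleftrightarrow> (\<forall>j. (j < n \<longrightarrow> 0 \<le> x j \<and> x j \<le> 1) \<and> (n \<le> j \<longrightarrow> x j = 0))"
proof -
  have e: "(x j \<in> (if j < n then {0..1} else {0})) = ((j < n \<longrightarrow> 0 \<le> x j \<and> x j \<le> 1) \<and> (n \<le> j \<longrightarrow> x j = 0))" for j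
    by (cases "j < n") auto
  have "x \<in> cube n \<longleftrightarrow> (\<forall>j. x j \<in> (if j < n then {0..1} else {0}))"
    by (simp add: cube_def PiE_UNIV_domain Pi_iff)
  then show ?thesis using e by simp
qed

lemma compact_cube: "compact (cube n)"
proof -
  have "compactin (product_topology (\<lambda>_. euclidean) UNIV) (cube n)"
    unfolding cube_def by (subst compactin_PiE) auto
  then show ?thesis by (simp add: euclidean_product_topology)
qed

lemma tendsto_fun_iff:
  "((g::'x \<Rightarrow> nat \<Rightarrow> real) \<longlongrightarrow> l) F \<longleftrightarrow> (\<forall>j. ((\<lambda>k. g k j) \<longlongrightarrow> l j) F)"
  using limitin_componentwise[of "\<lambda>_. euclidean" UNIV g l F]
  by (simp add: euclidean_product_topology)

lemma approx_fp:
  fixes f :: "(nat \<Rightarrow> real) \<Rightarrow> (nat \<Rightarrow> real)" and P :: nat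
  assumes fb: "\<And>x j. x \<in> cube n \<Longrightarrow> j < n \<Longrightarrow> 0 \<le> f x j \<and> f x j \<le> 1" and P: "P > 0"
  shows "\<exists>z\<in>cube n. \<forall>i<n. \<exists>a\<in>cube n. \<exists>b\<in>cube n.
     (\<forall>j<n. \<bar>a j - z j\<bar> \<le> 1 / real P \<and> \<bar>b j - z j\<bar> \<le> 1 / real P) \<and> a i \<le> f a i \<and> f b i \<le> b i"
proof -
  define gp where "gp x = (\<lambda>j. if j < n then real (x j) / real P else 0)" for x :: "nat \<Rightarrow> nat"
  have gp_cube: "gp x \<in> cube n" if "\<forall>j<n. x j \<le> P" for x
    using that P unfolding cube_iff gp_def by (auto simp: divide_le_eq_1)
  define label where "label x i = (if x i = 0 then 0 else
      if x i < P \<and> real (x i) / real P \<le> f (gp x) i then 0 else (1::nat))" for x i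
  have lab01: "label x i = 0 \<or> label x i = 1" for x i by (simp add: label_def)
  have L0: "gp x i \<le> f (gp x) i" if "\<forall>j<n. x j \<le> P" "i < n" "label x i = 0" for x i
  proof (cases "x i = 0")
    case True
    then show ?thesis using fb[OF gp_cube[OF that(1)] that(2)] that(2) by (simp add: gp_def)
  next
    case False
    then show ?thesis using that by (auto simp: gp_def label_def split: if_splits)
  qed
  have L1: "f (gp x) i \<le> gp x i" if "\<forall>j<n. x j \<le> P" "i < n" "label x i \<noteq> 0" for x i
  proof (cases "x i < P")
    case True
    then show ?thesis using that by (auto simp: gp_def label_def split: if_splits)
  next
    case False
    then have "x i = P" using that by force
    then show ?thesis using fb[OF gp_cube[OF that(1)] that(2)] that(2) P by (simp add: gp_def)
  qed
  obtain q where q1: "\<forall>i<n. q i < P"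
    and q2: "\<forall>i<n. \<exists>r s. (\<forall>j<n. q j \<le> r j \<and> r j \<le> q j + 1) \<and> (\<forall>j<n. q j \<le> s j \<and> s j \<le> q j + 1) \<and> label r i \<noteq> label s i"
  proof -
    have h1: "\<forall>x. (\<forall>i<n. x i \<le> P) \<longrightarrow> (\<forall>i<n. label x i = 0 \<or> label x i = 1)"
      by (simp add: label_def)
    have h2: "\<forall>x. (\<forall>i<n. x i \<le> P) \<longrightarrow> (\<forall>i<n. x i = 0 \<longrightarrow> label x i = 0)"
      by (simp add: label_def)
    have h3: "\<forall>x. (\<forall>i<n. x i \<le> P) \<longrightarrow> (\<forall>i<n. x i = P \<longrightarrow> label x i = 1)"
      using P by (simp add: label_def)
    show thesis using kuhn_lemma[OF P h1 h2 h3] that by blast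
  qed
  have dist: "\<bar>gp r j - gp q j\<bar> \<le> 1 / real P" if "\<forall>j<n. q j \<le> r j \<and> r j \<le> q j + 1" "j < n" for r j
  proof -
    have "\<bar>real (r j) - real (q j)\<bar> \<le> 1" using that by auto
    then have "\<bar>real (r j) - real (q j)\<bar> / real P \<le> 1 / real P"
      using P by (simp add: divide_right_mono)
    then show ?thesis using that(2) by (simp add: gp_def diff_divide_distrib[symmetric])
  qed
  have bnd: "\<forall>j<n. r j \<le> P" if "\<forall>j<n. q j \<le> r j \<and> r j \<le> q j + 1" for r
    using that q1 by (metis Suc_eq_plus1 Suc_leI le_trans)
  show ?thesis
  proof (rule bexI[where x="gp q"])
    show "gp q \<in> cube n" using q1 gp_cube by (simp add: less_imp_le)
    show "\<forall>i<n. \<exists>a\<in>cube n. \<exists>b\<in>cube n.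
     (\<forall>j<n. \<bar>a j - gp q j\<bar> \<le> 1 / real P \<and> \<bar>b j - gp q j\<bar> \<le> 1 / real P) \<and> a i \<le> f a i \<and> f b i \<le> b i"
    proof (intro allI impI)
    fix i assume i: "i < n"
    obtain r s where rs: "\<forall>j<n. q j \<le> r j \<and> r j \<le> q j + 1" "\<forall>j<n. q j \<le> s j \<and> s j \<le> q j + 1"
       "label r i \<noteq> label s i" using q2 i by blast
    let ?G = "\<exists>a\<in>cube n. \<exists>b\<in>cube n.
     (\<forall>j<n. \<bar>a j - gp q j\<bar> \<le> 1 / real P \<and> \<bar>b j - gp q j\<bar> \<le> 1 / real P) \<and> a i \<le> f a i \<and> f b i \<le> b i"
    have fin: "\<And>a b. a \<in> cube n \<Longrightarrow> b \<in> cube n \<Longrightarrow> (\<forall>j<n. \<bar>a j - gp q j\<bar> \<le> 1 / real P \<and> \<bar>b j - gp q j\<bar> \<le> 1 / real P)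
       \<Longrightarrow> a i \<le> f a i \<Longrightarrow> f b i \<le> b i \<Longrightarrow> ?G" by blast
    have d2: "\<forall>j<n. \<bar>gp r j - gp q j\<bar> \<le> 1 / real P \<and> \<bar>gp s j - gp q j\<bar> \<le> 1 / real P"
      using dist[OF rs(1)] dist[OF rs(2)] by simp
    have d2': "\<forall>j<n. \<bar>gp s j - gp q j\<bar> \<le> 1 / real P \<and> \<bar>gp r j - gp q j\<bar> \<le> 1 / real P"
      using d2 by simp
    have cr: "gp r \<in> cube n" and cs: "gp s \<in> cube n" using gp_cube bnd rs by auto
    show ?G
    proof (cases "label r i = 0")
      case True
      then have "label s i \<noteq> 0" using rs by simp
      then show ?thesis using fin[OF cr cs d2 L0[OF bnd[OF rs(1)] i True] L1[OF bnd[OF rs(2)] i]] by simp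
    next
      case False
      then have "label s i = 0" using rs(3) lab01[of r i] lab01[of s i] by auto
      then show ?thesis using fin[OF cs cr d2' L0[OF bnd[OF rs(2)] i] L1[OF bnd[OF rs(1)] i False]] by simp
    qed
    qed
  qed
qed

lemma brouwer_nat:
  fixes f :: "(nat \<Rightarrow> real) \<Rightarrow> (nat \<Rightarrow> real)"
  assumes fb: "\<And>x j. x \<in> cube n \<Longrightarrow> j < n \<Longrightarrow> 0 \<le> f x j \<and> f x j \<le> 1"
    and cont: "\<And>j. j < n \<Longrightarrow> continuous_on (cube n) (\<lambda>x. f x j)"
  shows "\<exists>x\<in>cube n. \<forall>j<n. f x j = x j"
proof -
  define Q where "Q k z \<longleftrightarrow> z \<in> cube n \<and> (\<forall>i<n. \<exists>a\<in>cube n. \<exists>b\<in>cube n.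
     (\<forall>j<n. \<bar>a j - z j\<bar> \<le> 1 / real (Suc k) \<and> \<bar>b j - z j\<bar> \<le> 1 / real (Suc k)) \<and> a i \<le> f a i \<and> f b i \<le> b i)" for k z
  define Z where "Z k = (SOME z. Q k z)" for k
  have QZ: "Q k (Z k)" for k
  proof -
    have "\<exists>z. Q k z" using approx_fp[where n=n and f=f and P="Suc k", OF fb] unfolding Q_def by auto
    then show ?thesis unfolding Z_def by (rule someI_ex)
  qed
  define R where "R k i a b \<longleftrightarrow> a \<in> cube n \<and> b \<in> cube n \<and>
     (\<forall>j<n. \<bar>a j - Z k j\<bar> \<le> 1 / real (Suc k) \<and> \<bar>b j - Z k j\<bar> \<le> 1 / real (Suc k)) \<and> a i \<le> f a i \<and> f b i \<le> b i" for k i a b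
  define AB where "AB k i = (SOME ab. R k i (fst ab) (snd ab))" for k i
  have RAB: "R k i (fst (AB k i)) (snd (AB k i))" if "i < n" for k i
  proof -
    have "\<exists>ab. R k i (fst ab) (snd ab)" using QZ[of k] that unfolding Q_def R_def by (metis (no_types, lifting) fst_conv snd_conv)
    then show ?thesis unfolding AB_def by (rule someI_ex)
  qed
  have Zc: "Z k \<in> cube n" for k using QZ[of k] by (simp add: Q_def)
  obtain l r where l: "l \<in> cube n" and r: "strict_mono r" and lim: "(Z \<circ> r) \<longlonglongrightarrow> l"
    using seq_compactE[OF compact_imp_seq_compact[OF compact_cube] , of Z] Zc by blast
  have conv: "W \<longlonglongrightarrow> l" if W: "\<And>k. W k \<in> cube n" "\<And>k j. j < n \<Longrightarrow> \<bar>W k j - Z (r k) j\<bar> \<le> 1 / real (Suc (r k))" for W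
    unfolding tendsto_fun_iff
  proof
    fix j
    show "(\<lambda>k. W k j) \<longlonglongrightarrow> l j"
    proof (cases "j < n")
      case True
      have lz: "(\<lambda>k. Z (r k) j) \<longlonglongrightarrow> l j" using lim unfolding tendsto_fun_iff by (simp add: o_def)
      have lim0: "(\<lambda>k. 1 / real (Suc k)) \<longlonglongrightarrow> 0" by (rule LIMSEQ_Suc[OF lim_inverse_n'])
      have bd: "\<bar>W k j - Z (r k) j\<bar> \<le> 1 / real (Suc k)" for k
      proof -
        have "k \<le> r k" using r by (simp add: strict_mono_imp_increasing)
        then have "1 / real (Suc (r k)) \<le> 1 / real (Suc k)" by (simp add: frac_le)
        then show ?thesis using W(2)[OF True, of k] by linarith
      qed
      have ev: "eventually (\<lambda>k. norm (W k j - Z (r k) j) \<le> 1 / real (Suc k)) sequentially"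
        using bd by (simp add: real_norm_def)
      have "(\<lambda>k. W k j - Z (r k) j) \<longlonglongrightarrow> 0"
        by (rule Lim_null_comparison[OF ev lim0])
      from tendsto_add[OF this lz] show ?thesis by simp
    next
      case False
      then have "W k j = 0" "l j = 0" for k using W(1)[of k] l by (auto simp: cube_iff)
      then show ?thesis by simp
    qed
  qed
  show ?thesis
  proof (intro bexI[OF _ l] allI impI)
    fix i assume i: "i < n"
    let ?A = "\<lambda>k. fst (AB (r k) i)" and ?B = "\<lambda>k. snd (AB (r k) i)"
    have RA: "R (r k) i (?A k) (?B k)" for k using RAB[OF i] .
    have cA: "?A \<longlonglongrightarrow> l" by (rule conv) (use RA in \<open>auto simp: R_def\<close>)
    have cB: "?B \<longlonglongrightarrow> l" by (rule conv) (use RA in \<open>auto simp: R_def\<close>)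
    have fA: "(\<lambda>k. f (?A k) i) \<longlonglongrightarrow> f l i"
      by (rule continuous_on_tendsto_compose[OF cont[OF i] cA l]) (use RA in \<open>auto simp: R_def\<close>)
    have fB: "(\<lambda>k. f (?B k) i) \<longlonglongrightarrow> f l i"
      by (rule continuous_on_tendsto_compose[OF cont[OF i] cB l]) (use RA in \<open>auto simp: R_def\<close>)
    have cAi: "(\<lambda>k. ?A k i) \<longlonglongrightarrow> l i" using cA unfolding tendsto_fun_iff by blast
    have cBi: "(\<lambda>k. ?B k i) \<longlonglongrightarrow> l i" using cB unfolding tendsto_fun_iff by blast
    have "l i \<le> f l i"
      by (rule tendsto_le[OF trivial_limit_sequentially fA cAi]) (use RA in \<open>auto simp: R_def\<close>)
    moreover have "f l i \<le> l i"
      by (rule tendsto_le[OF trivial_limit_sequentially cBi fB]) (use RA in \<open>auto simp: R_def\<close>)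
    ultimately show "f l i = l i" by simp
  qed
qed

definition delta :: "'s \<Rightarrow> 's \<Rightarrow> real" where "delta s = (\<lambda>t. if t = s then 1 else 0)"

definition U where "U N S Q \<sigma> i s = exp_payoff N S Q (\<sigma>(i := delta s)) i"
definition gain where "gain N S Q \<sigma> i s = max 0 (U N S Q \<sigma> i s - exp_payoff N S Q \<sigma> i)"
definition nm where "nm N S Q \<sigma> i s = (\<sigma> i s + gain N S Q \<sigma> i s) / (1 + (\<Sum>t\<in>S i. gain N S Q \<sigma> i t))"

lemma exp_payoff_linear:
  assumes fin: "finite N" and i: "i \<in> N" and finS: "finite (S i)"
  shows "exp_payoff N S Q (\<sigma>(i:=\<tau>)) k = (\<Sum>s\<in>S i. \<tau> s * exp_payoff N S Q (\<sigma>(i:=delta s)) k)"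
proof -
  have prod: "(\<Prod>j\<in>N. (\<sigma>(i:=\<rho>)) j (v j)) = \<rho> (v i) * (\<Prod>j\<in>N-{i}. \<sigma> j (v j))" for \<rho> v
    by (simp add: prod.remove[OF fin i])
  have "(\<Sum>s\<in>S i. \<tau> s * exp_payoff N S Q (\<sigma>(i:=delta s)) k)
      = (\<Sum>s\<in>S i. \<Sum>v\<in>positions N S. \<tau> s * (delta s (v i) * (\<Prod>j\<in>N-{i}. \<sigma> j (v j)) * Q v k))"
    unfolding exp_payoff_def prod by (simp add: sum_distrib_left)
  also have "\<dots> = (\<Sum>v\<in>positions N S. \<Sum>s\<in>S i. \<tau> s * (delta s (v i) * (\<Prod>j\<in>N-{i}. \<sigma> j (v j)) * Q v k))"
    by (rule sum.swap)
  also have "\<dots> = (\<Sum>v\<in>positions N S. \<tau> (v i) * (\<Prod>j\<in>N-{i}. \<sigma> j (v j)) * Q v k)"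
  proof (rule sum.cong[OF refl])
    fix v assume v: "v \<in> positions N S"
    then have vi: "v i \<in> S i" using i by (auto simp: positions_def PiE_iff)
    have "(\<Sum>s\<in>S i. \<tau> s * (delta s (v i) * (\<Prod>j\<in>N-{i}. \<sigma> j (v j)) * Q v k))
        = (\<Sum>s\<in>S i. (if v i = s then \<tau> s * ((\<Prod>j\<in>N-{i}. \<sigma> j (v j)) * Q v k) else 0))"
      by (rule sum.cong) (auto simp: delta_def)
    also have "\<dots> = \<tau> (v i) * (\<Prod>j\<in>N-{i}. \<sigma> j (v j)) * Q v k"
      using finS vi by (simp add: sum.delta)
    finally show "(\<Sum>s\<in>S i. \<tau> s * (delta s (v i) * (\<Prod>j\<in>N-{i}. \<sigma> j (v j)) * Q v k))
        = \<tau> (v i) * (\<Prod>j\<in>N-{i}. \<sigma> j (v j)) * Q v k" .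
  qed
  also have "\<dots> = exp_payoff N S Q (\<sigma>(i:=\<tau>)) k"
    unfolding exp_payoff_def prod by simp
  finally show ?thesis by simp
qed

lemma fixpoint_nash:
  assumes fin: "finite N" and finS: "\<forall>i\<in>N. finite (S i) \<and> S i \<noteq> {}"
    and \<sigma>: "\<sigma> \<in> mixed_profiles N S"
    and fx: "\<forall>i\<in>N. \<forall>s\<in>S i. nm N S Q \<sigma> i s = \<sigma> i s"
  shows "nash N S Q \<sigma>"
  unfolding nash_def
proof (intro conjI ballI \<sigma>)
  fix i \<tau> assume i: "i \<in> N" and \<tau>: "\<tau> \<in> mixed_strats S i"
  have fS: "finite (S i)" using finS i by auto
  have \<sigma>i: "\<sigma> i \<in> mixed_strats S i" using \<sigma> i by (auto simp: mixed_profiles_def PiE_iff)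
  then have \<sigma>nn: "\<And>s. 0 \<le> \<sigma> i s" and \<sigma>1: "sum (\<sigma> i) (S i) = 1" by (auto simp: mixed_strats_def)
  define u where "u = exp_payoff N S Q \<sigma> i"
  define G where "G = (\<Sum>t\<in>S i. gain N S Q \<sigma> i t)"
  have gnn: "0 \<le> gain N S Q \<sigma> i t" for t by (simp add: gain_def)
  have Gnn: "0 \<le> G" unfolding G_def by (rule sum_nonneg) (simp add: gnn)
  have lin: "u = (\<Sum>s\<in>S i. \<sigma> i s * U N S Q \<sigma> i s)"
    using exp_payoff_linear[where N=N and S=S and i=i and Q=Q and \<sigma>=\<sigma> and \<tau>="\<sigma> i" and k=i, OF fin i fS] unfolding u_def U_def by simp
  have geq: "\<sigma> i s * G = gain N S Q \<sigma> i s" if "s \<in> S i" for s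
  proof -
    have "(\<sigma> i s + gain N S Q \<sigma> i s) / (1 + G) = \<sigma> i s"
      using fx i that unfolding nm_def G_def by auto
    then show ?thesis using Gnn by (simp add: field_simps)
  qed
  obtain s0 where s0: "s0 \<in> S i" "\<sigma> i s0 > 0" "U N S Q \<sigma> i s0 \<le> u"
  proof (rule ccontr)
    assume "\<not> thesis"
    then have bad: "\<And>s. s \<in> S i \<Longrightarrow> \<sigma> i s > 0 \<Longrightarrow> U N S Q \<sigma> i s > u" using that by force
    obtain s1 where s1: "s1 \<in> S i" "\<sigma> i s1 > 0"
    proof (rule ccontr)
      assume "\<not> thesis"
      then have "\<forall>s\<in>S i. \<sigma> i s = 0" using that \<sigma>nn by (metis less_eq_real_def)
      then show False using \<sigma>1 by simp
    qed
    have "(\<Sum>s\<in>S i. \<sigma> i s * u) < (\<Sum>s\<in>S i. \<sigma> i s * U N S Q \<sigma> i s)"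
    proof (rule sum_strict_mono_ex1[OF fS])
      show "\<forall>s\<in>S i. \<sigma> i s * u \<le> \<sigma> i s * U N S Q \<sigma> i s"
        using bad \<sigma>nn by (metis less_eq_real_def mult_eq_0_iff mult_left_mono order_refl)
      show "\<exists>s\<in>S i. \<sigma> i s * u < \<sigma> i s * U N S Q \<sigma> i s"
        using s1 bad[OF s1] by (intro bexI[OF _ s1(1)]) simp
    qed
    moreover have "(\<Sum>s\<in>S i. \<sigma> i s * u) = u" using \<sigma>1 by (simp add: sum_distrib_right[symmetric])
    ultimately show False using lin by simp
  qed
  have "gain N S Q \<sigma> i s0 = 0" using s0 by (simp add: gain_def u_def)
  then have "G = 0" using geq[OF s0(1)] s0(2) by simp
  then have g0: "\<forall>t\<in>S i. gain N S Q \<sigma> i t = 0"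
    using sum_nonneg_eq_0_iff[OF fS, of "gain N S Q \<sigma> i"] gnn unfolding G_def by auto
  have Ule: "U N S Q \<sigma> i t \<le> u" if "t \<in> S i" for t
    using g0 that unfolding gain_def u_def by (metis max.cobounded2 diff_le_0_iff_le)
  have "exp_payoff N S Q (\<sigma>(i := \<tau>)) i = (\<Sum>s\<in>S i. \<tau> s * U N S Q \<sigma> i s)"
    using exp_payoff_linear[where N=N and S=S and i=i and Q=Q and \<sigma>=\<sigma> and \<tau>=\<tau> and k=i, OF fin i fS] unfolding U_def by simp
  also have "\<dots> \<le> (\<Sum>s\<in>S i. \<tau> s * u)"
    using \<tau> Ule by (intro sum_mono mult_left_mono) (auto simp: mixed_strats_def)
  also have "\<dots> = u" using \<tau> by (simp add: sum_distrib_right[symmetric] mixed_strats_def)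
  finally show "exp_payoff N S Q (\<sigma>(i := \<tau>)) i \<le> exp_payoff N S Q \<sigma> i" by (simp add: u_def)
qed


lemma cont_coord: "continuous_on A (\<lambda>x::nat\<Rightarrow>real. x k)"
  by (rule continuous_on_subset[OF continuous_on_product_coordinates]) auto

lemma continuous_on_Max_img:
  assumes "finite A" "A \<noteq> {}" "\<And>a. a \<in> A \<Longrightarrow> continuous_on K (\<lambda>x. g a x :: real)"
  shows "continuous_on K (\<lambda>x. Max ((\<lambda>a. g a x) ` A))"
  using assms
proof (induction A rule: finite_ne_induct)
  case (singleton a)
  then show ?case by simp
next
  case (insert a A)
  have "continuous_on K (\<lambda>x. max (g a x) (Max ((\<lambda>a. g a x) ` A)))"
    using insert by (intro continuous_intros) auto
  moreover have "Max ((\<lambda>a. g a x) ` insert a A) = max (g a x) (Max ((\<lambda>a. g a x) ` A))" for x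
    using insert by (simp add: Max_insert)
  ultimately show ?case by simp
qed

lemma cont_exp_payoff:
  assumes "\<And>j t. continuous_on K (\<lambda>x. \<tau> x j t)"
  shows "continuous_on K (\<lambda>x. exp_payoff N S Q (\<tau> x) k)"
  unfolding exp_payoff_def using assms by (intro continuous_intros) auto

lemma cont_nm:
  assumes "\<And>j t. continuous_on K (\<lambda>x. \<tau> x j t)"
  shows "continuous_on K (\<lambda>x. nm N S Q (\<tau> x) i s)"
proof -
  have cU: "continuous_on K (\<lambda>x. U N S Q (\<tau> x) i t)" for t
    unfolding U_def
  proof (rule cont_exp_payoff)
    fix j t'
    show "continuous_on K (\<lambda>x. ((\<tau> x)(i := delta t)) j t')"
      using assms by (cases "j = i") auto
  qed
  have cE: "continuous_on K (\<lambda>x. exp_payoff N S Q (\<tau> x) i)"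
    by (rule cont_exp_payoff[OF assms])
  have cG: "continuous_on K (\<lambda>x. gain N S Q (\<tau> x) i t)" for t
    unfolding gain_def using cU cE by (intro continuous_intros) auto
  have gnn: "0 \<le> gain N S Q \<sigma> i t" for \<sigma> t by (simp add: gain_def)
  have pos: "1 + (\<Sum>t\<in>S i. gain N S Q (\<tau> x) i t) \<noteq> 0" for x
  proof -
    have "0 \<le> (\<Sum>t\<in>S i. gain N S Q (\<tau> x) i t)" by (rule sum_nonneg) (simp add: gnn)
    then show ?thesis by simp
  qed
  show ?thesis
    unfolding nm_def using assms cG pos by (intro continuous_intros) auto
qed

lemma nm_props:
  assumes "\<sigma> \<in> mixed_profiles N S" "i \<in> N" "finite (S i)"
  shows "0 \<le> nm N S Q \<sigma> i s" "(\<Sum>s\<in>S i. nm N S Q \<sigma> i s) = 1"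
proof -
  have \<sigma>i: "\<sigma> i \<in> mixed_strats S i" using assms by (auto simp: mixed_profiles_def PiE_iff)
  have gnn: "0 \<le> gain N S Q \<sigma> i t" for t by (simp add: gain_def)
  define G where "G = (\<Sum>t\<in>S i. gain N S Q \<sigma> i t)"
  have Gnn: "0 \<le> G" unfolding G_def by (rule sum_nonneg) (simp add: gnn)
  show "0 \<le> nm N S Q \<sigma> i s"
    unfolding nm_def using \<sigma>i gnn[of s] Gnn G_def by (auto simp: mixed_strats_def)
  have "(\<Sum>s\<in>S i. nm N S Q \<sigma> i s) = (\<Sum>s\<in>S i. \<sigma> i s + gain N S Q \<sigma> i s) / (1 + G)"
    unfolding nm_def G_def by (simp add: sum_divide_distrib)
  also have "\<dots> = (1 + G) / (1 + G)"
    using \<sigma>i by (simp add: sum.distrib mixed_strats_def G_def)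
  also have "\<dots> = 1" using Gnn by simp
  finally show "(\<Sum>s\<in>S i. nm N S Q \<sigma> i s) = 1" .
qed

lemma nash_exists:
  assumes fin: "finite N" and finS: "\<forall>i\<in>N. finite (S i) \<and> S i \<noteq> {}"
  shows "\<exists>\<sigma>. nash N S Q \<sigma>"
proof -
  define Sig where "Sig = Sigma N S"
  have finSig: "finite Sig" unfolding Sig_def using fin finS by auto
  define m where "m = card Sig"
  obtain h where h: "bij_betw h {0..<m} Sig" unfolding m_def using ex_bij_betw_nat_finite[OF finSig] by blast
  define idx where "idx = inv_into {0..<m} h"
  have idx1: "idx p < m" "h (idx p) = p" if "p \<in> Sig" for p
    using h that unfolding idx_def bij_betw_def
    by (auto simp: f_inv_into_f inv_into_into[of p h "{0..<m}", simplified])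
  have h1: "h j \<in> Sig" "idx (h j) = j" if "j < m" for j
    using h that unfolding idx_def bij_betw_def by (auto simp: inv_into_f_f)
  define M where "M x i = Max ((\<lambda>s. x (idx (i,s))) ` S i)" for x :: "nat \<Rightarrow> real" and i
  define y where "y x i s = x (idx (i,s)) + 1 - M x i" for x i s
  define sg where "sg x = (\<lambda>i. if i \<in> N then (\<lambda>s. if s \<in> S i then y x i s / (\<Sum>t\<in>S i. y x i t) else 0) else undefined)" for x
  define T where "T x = nm N S Q (sg x)" for x
  define Mt where "Mt x i = Max ((\<lambda>s. T x i s) ` S i)" for x i
  define F where "F x = (\<lambda>j. if j < m then T x (fst (h j)) (snd (h j)) / Mt x (fst (h j)) else 0)" for x
  have xb: "0 \<le> x (idx (i,s)) \<and> x (idx (i,s)) \<le> 1" if "x \<in> cube m" "i \<in> N" "s \<in> S i" for x i s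
    using that idx1[of "(i,s)"] unfolding Sig_def cube_iff by auto
  have Mge: "x (idx (i,s)) \<le> M x i" if "i \<in> N" "s \<in> S i" for x i s
    unfolding M_def using finS that by (intro Max_ge) auto
  have Mle: "M x i \<le> 1" if "x \<in> cube m" "i \<in> N" for x i
    unfolding M_def using finS that xb by (subst Max_le_iff) auto
  have Min: "\<exists>s\<in>S i. x (idx (i,s)) = M x i" if "i \<in> N" for x i
  proof -
    have "M x i \<in> (\<lambda>s. x (idx (i,s))) ` S i" unfolding M_def using finS that by (intro Max_in) auto
    then show ?thesis by auto
  qed
  have ynn: "0 \<le> y x i s" if "x \<in> cube m" "i \<in> N" "s \<in> S i" for x i s
    using xb[OF that] Mle[OF that(1,2)] by (simp add: y_def)
  have ypos: "0 < (\<Sum>t\<in>S i. y x i t)" if c: "x \<in> cube m" "i \<in> N" for x i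
  proof -
    obtain s0 where s0: "s0 \<in> S i" "x (idx (i,s0)) = M x i" using Min[OF c(2)] by blast
    have "y x i s0 \<le> (\<Sum>t\<in>S i. y x i t)"
      using finS c s0 ynn by (intro member_le_sum) auto
    moreover have "y x i s0 = 1" using s0 by (simp add: y_def)
    ultimately show ?thesis by simp
  qed
  have sgm: "sg x \<in> mixed_profiles N S" if "x \<in> cube m" for x
    unfolding mixed_profiles_def
  proof (rule PiE_I)
    fix i assume i: "i \<in> N"
    have "(\<Sum>s\<in>S i. y x i s / (\<Sum>t\<in>S i. y x i t)) = 1"
      using ypos[OF that i] by (simp add: sum_divide_distrib[symmetric])
    then show "sg x i \<in> mixed_strats S i"
      unfolding mixed_strats_def sg_def using i ynn[OF that i] ypos[OF that i]
      by (auto intro: divide_nonneg_pos)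
  next
    fix i assume "i \<notin> N" then show "sg x i = undefined" by (simp add: sg_def)
  qed
  have Tnn: "0 \<le> T x i s" and Tsum: "(\<Sum>s\<in>S i. T x i s) = 1" if "x \<in> cube m" "i \<in> N" for x i s
    using nm_props[OF sgm[OF that(1)] that(2)] finS that(2) unfolding T_def by auto
  have Mtge: "T x i s \<le> Mt x i" if "i \<in> N" "s \<in> S i" for x i s
    unfolding Mt_def using finS that by (intro Max_ge) auto
  have Mtin: "\<exists>s\<in>S i. T x i s = Mt x i" if "i \<in> N" for x i
  proof -
    have "Mt x i \<in> (\<lambda>s. T x i s) ` S i" unfolding Mt_def using finS that by (intro Max_in) auto
    then show ?thesis by auto
  qed
  have Mtpos: "0 < Mt x i" if "x \<in> cube m" "i \<in> N" for x i
  proof (rule ccontr)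
    assume "\<not> 0 < Mt x i"
    then have "\<forall>s\<in>S i. T x i s \<le> 0" using Mtge[OF that(2)] by (meson not_less order_trans)
    then have "(\<Sum>s\<in>S i. T x i s) \<le> 0" by (simp add: sum_nonpos)
    then show False using Tsum[OF that] by simp
  qed
  have csg: "continuous_on (cube m) (\<lambda>x. sg x j t)" for j t
  proof (cases "j \<in> N \<and> t \<in> S j")
    case True
    have cy: "continuous_on (cube m) (\<lambda>x. y x j s)" if "s \<in> S j" for s
      unfolding y_def M_def using finS True
      by (intro continuous_intros continuous_on_Max_img cont_coord) auto
    have "continuous_on (cube m) (\<lambda>x. y x j t / (\<Sum>t\<in>S j. y x j t))"
      using True cy ypos by (intro continuous_intros) (auto simp: less_imp_neq[symmetric])
    then show ?thesis using True by (simp add: sg_def)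
  next
    case False
    show ?thesis
    proof (cases "j \<in> N")
      case True
      then show ?thesis using False by (simp add: sg_def)
    next
      case False
      then show ?thesis by (simp add: sg_def)
    qed
  qed
  have cT: "continuous_on (cube m) (\<lambda>x. T x i s)" for i s
    unfolding T_def by (rule cont_nm[OF csg])
  have cF: "continuous_on (cube m) (\<lambda>x. F x j)" if "j < m" for j
  proof -
    have hj: "fst (h j) \<in> N" using h1[OF that] by (auto simp: Sig_def)
    have "continuous_on (cube m) (\<lambda>x. T x (fst (h j)) (snd (h j)) / Mt x (fst (h j)))"
      unfolding Mt_def using finS hj Mtpos[OF _ hj] cT
      by (intro continuous_intros continuous_on_Max_img) (auto simp: Mt_def less_imp_neq[symmetric])
    then show ?thesis using that by (simp add: F_def)
  qed
  have Fb: "0 \<le> F x j \<and> F x j \<le> 1" if "x \<in> cube m" "j < m" for x j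
  proof -
    have hj: "fst (h j) \<in> N" "snd (h j) \<in> S (fst (h j))" using h1[OF that(2)] by (auto simp: Sig_def)
    show ?thesis using that Tnn[OF that(1) hj(1)] Mtge[OF hj] Mtpos[OF that(1) hj(1)]
      by (auto simp: F_def)
  qed
  obtain x where x: "x \<in> cube m" and fx: "\<forall>j<m. F x j = x j"
    using brouwer_nat[of m F, OF Fb cF] by blast
  have xe: "x (idx (i,s)) = T x i s / Mt x i" if "i \<in> N" "s \<in> S i" for i s
  proof -
    have p: "(i,s) \<in> Sig" using that by (auto simp: Sig_def)
    show ?thesis using fx idx1[OF p] by (auto simp: F_def)
  qed
  have M1: "M x i = 1" if i: "i \<in> N" for i
  proof -
    obtain s1 where s1: "s1 \<in> S i" "T x i s1 = Mt x i" using Mtin[OF i] by blast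
    have "x (idx (i,s1)) = 1" using xe[OF i s1(1)] s1(2) Mtpos[OF x i] by simp
    then have "1 \<le> M x i" using Mge[OF i s1(1), of x] by simp
    then show ?thesis using Mle[OF x i] by simp
  qed
  have sgfix: "nm N S Q (sg x) i s = sg x i s" if i: "i \<in> N" and s: "s \<in> S i" for i s
  proof -
    have ye: "y x i t = T x i t / Mt x i" if "t \<in> S i" for t
      using xe[OF i that] M1[OF i] by (simp add: y_def)
    have "(\<Sum>t\<in>S i. y x i t) = (\<Sum>t\<in>S i. T x i t) / Mt x i"
      using ye by (simp add: sum_divide_distrib)
    also have "\<dots> = 1 / Mt x i" using Tsum[OF x i] by simp
    finally have sy: "(\<Sum>t\<in>S i. y x i t) = 1 / Mt x i" .
    have "sg x i s = T x i s" using i s ye[OF s] sy Mtpos[OF x i] by (simp add: sg_def)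
    then show ?thesis by (simp add: T_def)
  qed
  show ?thesis using fixpoint_nash[OF fin finS sgm[OF x]] sgfix by blast
qed

definition Dset :: "'i set \<Rightarrow> ('i \<Rightarrow> 's set) \<Rightarrow> ('i, 's) mgame \<Rightarrow> ('i \<Rightarrow> 's) set" where
  "Dset N S g = {v \<in> positions N S. \<exists>j\<in>N. snd g j v \<noteq> fst g v}"

lemma finite_positions: "finite N \<Longrightarrow> \<forall>i\<in>N. finite (S i) \<Longrightarrow> finite (positions N S)"
  by (simp add: positions_def finite_PiE)

lemma Dset_adapt: "Dset N S (adapt N g u) = Dset N S g - {u}"
  by (auto simp: Dset_def adapt_def)

lemma adapt_id: assumes "u \<notin> Dset N S g" "u \<in> positions N S" shows "adapt N g u = g"
proof -
  have "(\<lambda>j. if j \<in> N then (snd g j)(u := fst g u) else snd g j) = snd g"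
  proof
    fix j show "(if j \<in> N then (snd g j)(u := fst g u) else snd g j) = snd g j"
      using assms by (auto simp: Dset_def)
  qed
  then show ?thesis by (simp add: adapt_def)
qed

lemma chi_sub: "chi N S \<sigma> \<subseteq> positions N S"
  unfolding chi_def positions_def by (rule PiE_mono) auto

lemma AD_mem: "g' \<in> AD N S M \<longleftrightarrow> (\<exists>g\<in>M. g' \<in> AD N S {g})"
  unfolding AD_def by blast

lemma AD_single: "g' \<in> AD N S {g} \<longleftrightarrow> (\<exists>\<sigma> u. \<sigma> \<in> NME N S g \<and> u \<in> chi N S \<sigma> \<and> g' = adapt N g u)"
  unfolding AD_def by blast

lemma edge:
  assumes fin: "finite N" "\<forall>i\<in>N. finite (S i)" and g': "g' \<in> AD N S {g}"
  shows "g' = g \<or> card (Dset N S g') < card (Dset N S g)"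
proof -
  obtain \<sigma> u where u: "u \<in> chi N S \<sigma>" and g'e: "g' = adapt N g u" using g' AD_single by blast
  have up: "u \<in> positions N S" using u chi_sub by blast
  have finD: "finite (Dset N S g)"
    using finite_positions[OF fin] by (rule finite_subset[rotated]) (auto simp: Dset_def)
  show ?thesis
  proof (cases "u \<in> Dset N S g")
    case True
    then have "card (Dset N S g') < card (Dset N S g)"
      unfolding g'e Dset_adapt using finD True by (metis card_Diff1_less)
    then show ?thesis by simp
  next
    case False
    then show ?thesis using adapt_id[OF False up] g'e by simp
  qed
qed

lemma NME_ne:
  assumes fin: "finite N" and finS: "\<forall>i\<in>N. finite (S i) \<and> S i \<noteq> {}"
  shows "\<exists>\<sigma>. \<sigma> \<in> NME N S g"
proof -
  define \<tau> where "\<tau> i = (SOME \<tau>. nash N S (snd g i) \<tau>)" for i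
  have n\<tau>: "nash N S (snd g i) (\<tau> i)" for i
  proof -
    have e: "\<exists>\<tau>. nash N S (snd g i) \<tau>" by (rule nash_exists[OF fin finS])
    show ?thesis unfolding \<tau>_def by (rule someI_ex[OF e])
  qed
  define \<sigma> where "\<sigma> = (\<lambda>i. if i \<in> N then \<tau> i i else undefined)"
  have "\<sigma> \<in> mixed_profiles N S"
    unfolding mixed_profiles_def
  proof (rule PiE_I)
    fix i assume i: "i \<in> N"
    then show "\<sigma> i \<in> mixed_strats S i"
      using n\<tau>[of i] unfolding nash_def mixed_profiles_def \<sigma>_def by (auto simp: PiE_iff)
  qed (simp add: \<sigma>_def)
  moreover have "\<forall>i\<in>N. \<exists>\<tau>'. nash N S (snd g i) \<tau>' \<and> \<sigma> i = \<tau>' i"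
    using n\<tau> by (auto simp: \<sigma>_def)
  ultimately show ?thesis unfolding NME_def by blast
qed

lemma chi_ne:
  assumes "\<sigma> \<in> NME N S g"
  shows "chi N S \<sigma> \<noteq> {}"
proof -
  have "\<forall>i\<in>N. {s \<in> S i. \<sigma> i s \<noteq> 0} \<noteq> {}"
  proof
    fix i assume i: "i \<in> N"
    have "\<sigma> i \<in> mixed_strats S i" using assms i by (auto simp: NME_def mixed_profiles_def PiE_iff)
    then have "sum (\<sigma> i) (S i) = 1" by (simp add: mixed_strats_def)
    then show "{s \<in> S i. \<sigma> i s \<noteq> 0} \<noteq> {}"
      by (metis (mono_tags, lifting) empty_iff mem_Collect_eq sum.neutral zero_neq_one)
  qed
  then show ?thesis unfolding chi_def by (simp add: PiE_eq_empty_iff)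
qed

lemma AD_ne:
  assumes fin: "finite N" and finS: "\<forall>i\<in>N. finite (S i) \<and> S i \<noteq> {}" and "M \<noteq> {}"
  shows "AD N S M \<noteq> {}"
proof -
  obtain g where g: "g \<in> M" using assms by blast
  obtain \<sigma> where \<sigma>: "\<sigma> \<in> NME N S g" using NME_ne[OF fin finS] by blast
  obtain u where "u \<in> chi N S \<sigma>" using chi_ne[OF \<sigma>] by blast
  then have "adapt N g u \<in> AD N S M" using g \<sigma> unfolding AD_def by blast
  then show ?thesis by blast
qed

lemma AD_iter_Suc: "AD_iter (Suc t) N S M = AD N S (AD_iter t N S M)"
  by (simp add: AD_iter_def)

lemma AD_iter_0: "AD_iter 0 N S M = M"
  by (simp add: AD_iter_def)

fun Yl :: "nat \<Rightarrow> 'i set \<Rightarrow> ('i \<Rightarrow> 's set) \<Rightarrow> ('i, 's) mgame \<Rightarrow> ('i, 's) mgame set" where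
  "Yl 0 N S m = {}"
| "Yl (Suc t) N S m = AD N S (Yl t N S m) \<union> {g \<in> AD_iter t N S {m}. g \<in> AD N S {g}}"

lemma Yl_1:
  assumes fin: "finite N" "\<forall>i\<in>N. finite (S i)" and g: "g \<in> AD_iter t N S {m}"
  shows "card (Dset N S g) + t \<le> card (Dset N S m) \<or> g \<in> Yl t N S m"
  using g
proof (induction t arbitrary: g)
  case 0
  then show ?case by (simp add: AD_iter_0)
next
  case (Suc t)
  then have "g \<in> AD N S (AD_iter t N S {m})" by (simp only: AD_iter_Suc)
  then obtain g0 where g0: "g0 \<in> AD_iter t N S {m}" "g \<in> AD N S {g0}"
    using AD_mem by blast
  show ?case
  proof (cases "g = g0")
    case True
    then show ?thesis using g0 by simp
  next
    case False
    then have lt: "card (Dset N S g) < card (Dset N S g0)" using edge[OF fin g0(2)] by simp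
    from Suc.IH[OF g0(1)] show ?thesis
    proof
      assume "card (Dset N S g0) + t \<le> card (Dset N S m)"
      then show ?thesis using lt by simp
    next
      assume "g0 \<in> Yl t N S m"
      then have "g \<in> AD N S (Yl t N S m)" using g0(2) AD_mem by blast
      then show ?thesis by simp
    qed
  qed
qed

lemma Yl_2: "Yl t N S m \<subseteq> AD_iter (Suc t) N S {m}"
proof (induction t)
  case 0
  then show ?case by simp
next
  case (Suc t)
  show ?case
  proof
    fix g' assume "g' \<in> Yl (Suc t) N S m"
    then consider "g' \<in> AD N S (Yl t N S m)" | "g' \<in> AD_iter t N S {m}" "g' \<in> AD N S {g'}" by auto
    then show "g' \<in> AD_iter (Suc (Suc t)) N S {m}"
    proof cases
      case 1
      then obtain g where g: "g \<in> Yl t N S m" "g' \<in> AD N S {g}" using AD_mem by blast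
      then have "g \<in> AD_iter (Suc t) N S {m}" using Suc.IH by blast
      then have "g' \<in> AD N S (AD_iter (Suc t) N S {m})" using g(2) AD_mem by blast
      then show ?thesis by (simp only: AD_iter_Suc)
    next
      case 2
      then have "g' \<in> AD N S (AD_iter t N S {m})" using AD_mem by blast
      then have a: "g' \<in> AD_iter (Suc t) N S {m}" by (simp only: AD_iter_Suc)
      then have "g' \<in> AD N S (AD_iter (Suc t) N S {m})" using 2(2) AD_mem by blast
      then show ?thesis by (simp only: AD_iter_Suc)
    qed
  qed
qed

lemma Yl_3: "Yl (Suc t) N S m \<subseteq> AD_iter t N S {m}"
proof (induction t)
  case 0
  then show ?case by (auto simp: AD_def)
next
  case (Suc t)
  show ?case
  proof
    fix g' assume "g' \<in> Yl (Suc (Suc t)) N S m"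
    then consider "g' \<in> AD N S (Yl (Suc t) N S m)" | "g' \<in> AD_iter (Suc t) N S {m}" by auto
    then show "g' \<in> AD_iter (Suc t) N S {m}"
    proof cases
      case 1
      then obtain g where g: "g \<in> Yl (Suc t) N S m" "g' \<in> AD N S {g}" using AD_mem by blast
      then have "g \<in> AD_iter t N S {m}" using Suc.IH by blast
      then have "g' \<in> AD N S (AD_iter t N S {m})" using g(2) AD_mem by blast
      then show ?thesis by (simp only: AD_iter_Suc)
    qed
  qed
qed

lemma AD_stab:
  assumes fin: "finite N" "\<forall>i\<in>N. finite (S i)"
  shows "AD_iter (Suc (Suc (card (Dset N S m)))) N S {m} = AD_iter (Suc (card (Dset N S m))) N S {m}"
    (is "AD_iter (Suc ?t) N S {m} = AD_iter ?t N S {m}")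
proof
  show "AD_iter (Suc ?t) N S {m} \<subseteq> AD_iter ?t N S {m}"
  proof
    fix g assume g: "g \<in> AD_iter (Suc ?t) N S {m}"
    have "g \<in> Yl (Suc ?t) N S m" using Yl_1[OF fin g] by simp
    then show "g \<in> AD_iter ?t N S {m}" using Yl_3 by blast
  qed
  show "AD_iter ?t N S {m} \<subseteq> AD_iter (Suc ?t) N S {m}"
  proof
    fix g assume g: "g \<in> AD_iter ?t N S {m}"
    have "g \<in> Yl ?t N S m" using Yl_1[OF fin g] by simp
    then show "g \<in> AD_iter (Suc ?t) N S {m}" using Yl_2 by blast
  qed
qed

theorem proposition15:
  fixes N :: "'i set" and S :: "'i \<Rightarrow> 's set" and mG :: "('i, 's) mgame"
  assumes "finite N"
    and "\<forall>i\<in>N. finite (S i) \<and> S i \<noteq> {}"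
    and "\<forall>i\<in>N. \<forall>j\<in>N. card (S i) = card (S j)"
  shows "SME N S mG \<noteq> {}"
proof -
  note fin = assms(1) and finS = assms(2)
  have finS': "\<forall>i\<in>N. finite (S i)" using finS by blast
  define L where "L = AD_length N S {mG}"
  define X where "X = AD_iter L N S {mG}"
  have ex: "\<exists>t. AD_iter (Suc t) N S {mG} = AD_iter t N S {mG}"
    using AD_stab[OF fin finS'] by blast
  have fixL: "AD_iter (Suc L) N S {mG} = AD_iter L N S {mG}"
    unfolding L_def AD_length_def by (rule LeastI_ex[OF ex])
  have XAD: "AD N S X = X" using fixL unfolding X_def by (simp only: AD_iter_Suc)
  have ne: "AD_iter t N S {mG} \<noteq> {}" for t
  proof (induction t)
    case 0 then show ?case by (simp add: AD_iter_0)
  next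
    case (Suc t) then show ?case using AD_ne[OF fin finS] by (simp only: AD_iter_Suc)
  qed
  obtain g0 where "g0 \<in> X" using ne[of L] unfolding X_def by blast
  then obtain g where g: "g \<in> X" and gmin: "\<And>g'. g' \<in> X \<Longrightarrow> card (Dset N S g) \<le> card (Dset N S g')"
    using ex_has_least_nat[of "\<lambda>g. g \<in> X" g0 "\<lambda>g. card (Dset N S g)"] by blast
  obtain \<sigma> where \<sigma>: "\<sigma> \<in> NME N S g" using NME_ne[OF fin finS] by blast
  have stab: "adapt N g v = g" if v: "v \<in> chi N S \<sigma>" for v
  proof -
    have "adapt N g v \<in> AD N S {g}" using \<sigma> v unfolding AD_def by blast
    then have "adapt N g v \<in> X" using g XAD AD_mem by blast
    then have le: "card (Dset N S g) \<le> card (Dset N S (adapt N g v))" by (rule gmin)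
    have vp: "v \<in> positions N S" using v chi_sub by blast
    have nv: "v \<notin> Dset N S g"
    proof
      assume vD: "v \<in> Dset N S g"
      have finD: "finite (Dset N S g)"
        using finite_positions[OF fin finS'] by (rule finite_subset[rotated]) (auto simp: Dset_def)
      have "card (Dset N S (adapt N g v)) < card (Dset N S g)"
        unfolding Dset_adapt using finD vD by (metis card_Diff1_less)
      then show False using le by simp
    qed
    show ?thesis by (rule adapt_id[OF nv vp])
  qed
  have "\<sigma> \<in> SME N S mG"
    unfolding SME_def AD_inf_def using g \<sigma> stab unfolding X_def L_def by blast
  then show ?thesis by blast
qed

end
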